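(* If $f,g\in I$ are nonzero with $S(f)=S(g)$ and $LM(f)\neq LM(g)$, then there exist $a,b\in k^*$ such that $af+bg\neq0$ and $S(af+bg)<_{sign}S(f)$.
   Context: Let $k$ be a field with a valuation $val$, $A=k[X_1,\dots,X_n]$, $|f|$ the total degree. Fix $w\in val(k^* )^n$ and a monomial order $\le_1$. Tropical term order: for $a,b\in k^*$, $ax^\alpha<bx^\beta$ if $|x^\alpha|<|x^\beta|$, or equal degrees and $val(a)+w\cdot\alpha>val(b)+w\cdot\beta$, or equal degrees, equal such quantities and $x^\alpha<_1x^\beta$. $LM(f)$ is the monomial of the largest term of $f$. Let $f_1,\dots,f_s\in A$ ordered by increasing degree, $I=\langle f_1,\dots,f_s\rangle$, $(e_i)$ the canonical basis of $A^s$. Tame syzygy: $(a_1,\dots,a_s)\in A^s$ with $\sum a_jf_j=0$ and an $i$ with $a_i\neq0$, $a_j=0$ for $j>i$, $|a_jf_j|\le|a_if_i|$ for $j<i$; leading monomial $LM(a_i)e_i$; $LM(TSyz(F))$ is the submodule of $A^s$ generated by these. Fix a degree-refining monomial order $\le_m$. Total order $\le_{sign}$ on monomials of $A^s$: $x^\alpha e_i\le_{sign}x^\beta e_j$ if $i<j$; or $i=j$ and $|x^\alpha f_i|<|x^\beta f_i|$; or $i=j$, equal degrees, and either ($x^\alpha e_i\notin LM(TSyz(F))$, $x^\beta e_i\in LM(TSyz(F))$), or (both in and $x^\alpha\le_mx^\beta$), or (both not in and $x^\alpha\le_mx^\beta$). $I_{\le_{sign}x^\alpha e_i}=\mathrm{Span}_k\{x^\beta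 f_j:x^\beta e_j\le_{sign}x^\alpha e_i\}$; the signature $S(f)$ of nonzero $f\in I$ is the smallest $x^\alpha e_i$ with $f\in I_{\le_{sign}x^\alpha e_i}$. *)

theory Defs
  imports Complex_Main "HOL-Library.Poly_Mapping"
begin

type_synonym 'v mon = "'v \<Rightarrow>\<^sub>0 nat"
type_synonym ('v, 'k) mpoly = "'v mon \<Rightarrow>\<^sub>0 'k"

text \<open>Monomials of A^s: x^alpha e_i is represented by the pair (alpha, i), with i < s
  (indices 0..s-1).  Elements of A^s are functions nat => A (entries beyond s are 0).\<close>

definition mdeg :: "('v::finite) mon \<Rightarrow> nat" where
  "mdeg \<alpha> = (\<Sum>v\<in>UNIV. Poly_Mapping.lookup \<alpha> v)"

definition tdeg :: "('v::finite, 'k::zero) mpoly \<Rightarrow> nat" where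
  "tdeg f = (if f = 0 then 0 else Max (mdeg ` Poly_Mapping.keys f))"

definition xmon :: "'v mon \<Rightarrow> ('v, 'k::{zero,one}) mpoly" where
  "xmon \<alpha> = Poly_Mapping.single \<alpha> 1"

text \<open>A valuation on k, given on k^* with values in the reals.\<close>
definition is_valuation :: "('k::field \<Rightarrow> real) \<Rightarrow> bool" where
  "is_valuation val \<longleftrightarrow>
     (\<forall>a b. a \<noteq> 0 \<longrightarrow> b \<noteq> 0 \<longrightarrow> val (a * b) = val a + val b) \<and>
     (\<forall>a b. a \<noteq> 0 \<longrightarrow> b \<noteq> 0 \<longrightarrow> a + b \<noteq> 0 \<longrightarrow> min (val a) (val b) \<le> val (a + b))"

definition is_monomial_order :: "('v mon \<Rightarrow> 'v mon \<Rightarrow> bool) \<Rightarrow> bool" where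
  "is_monomial_order le \<longleftrightarrow>
     (\<forall>x. le x x) \<and> (\<forall>x y. le x y \<and> le y x \<longrightarrow> x = y) \<and>
     (\<forall>x y z. le x y \<and> le y z \<longrightarrow> le x z) \<and> (\<forall>x y. le x y \<or> le y x) \<and>
     (\<forall>x. le 0 x) \<and> (\<forall>x y z. le x y \<longrightarrow> le (x + z) (y + z))"

definition is_deg_monomial_order :: "(('v::finite) mon \<Rightarrow> 'v mon \<Rightarrow> bool) \<Rightarrow> bool" where
  "is_deg_monomial_order le \<longleftrightarrow>
     is_monomial_order le \<and> (\<forall>x y. mdeg x < mdeg y \<longrightarrow> le x y)"

definition wdot :: "('v::finite \<Rightarrow> real) \<Rightarrow> 'v mon \<Rightarrow> real" where
  "wdot w \<alpha> = (\<Sum>v\<in>UNIV. w v * real (Poly_Mapping.lookup \<alpha> v))"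

definition trop_less ::
  "('k \<Rightarrow> real) \<Rightarrow> ('v::finite \<Rightarrow> real) \<Rightarrow> ('v mon \<Rightarrow> 'v mon \<Rightarrow> bool)
   \<Rightarrow> 'k \<times> 'v mon \<Rightarrow> 'k \<times> 'v mon \<Rightarrow> bool" where
  "trop_less val w le1 t u = (case t of (a, \<alpha>) \<Rightarrow> case u of (b, \<beta>) \<Rightarrow>
     mdeg \<alpha> < mdeg \<beta> \<or>
     (mdeg \<alpha> = mdeg \<beta> \<and> val a + wdot w \<alpha> > val b + wdot w \<beta>) \<or>
     (mdeg \<alpha> = mdeg \<beta> \<and> val a + wdot w \<alpha> = val b + wdot w \<beta> \<and> le1 \<alpha> \<beta> \<and> \<alpha> \<noteq> \<beta>))"

definition LM ::
  "('k::zero \<Rightarrow> real) \<Rightarrow> ('v::finite \<Rightarrow> real) \<Rightarrow> ('v mon \<Rightarrow> 'v mon \<Rightarrow> bool)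
   \<Rightarrow> ('v, 'k) mpoly \<Rightarrow> 'v mon" where
  "LM val w le1 f = (THE \<alpha>. \<alpha> \<in> Poly_Mapping.keys f \<and>
      (\<forall>\<beta>\<in>Poly_Mapping.keys f. \<beta> \<noteq> \<alpha> \<longrightarrow> trop_less val w le1 (Poly_Mapping.lookup f \<beta>, \<beta>) (Poly_Mapping.lookup f \<alpha>, \<alpha>)))"

definition tame_syz ::
  "('v::finite, 'k::field) mpoly list \<Rightarrow> (nat \<Rightarrow> ('v, 'k) mpoly) \<Rightarrow> nat \<Rightarrow> bool" where
  "tame_syz F a i \<longleftrightarrow> i < length F \<and> (\<forall>j\<ge>length F. a j = 0) \<and>
     (\<Sum>j<length F. a j * F ! j) = 0 \<and> a i \<noteq> 0 \<and>
     (\<forall>j. i < j \<and> j < length F \<longrightarrow> a j = 0) \<and>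
     (\<forall>j<i. tdeg (a j * F ! j) \<le> tdeg (a i * F ! i))"

definition vmon :: "'v mon \<Rightarrow> nat \<Rightarrow> nat \<Rightarrow> ('v, 'k::{zero,one}) mpoly" where
  "vmon \<alpha> i = (\<lambda>j. if j = i then xmon \<alpha> else 0)"

inductive_set LM_TSyz ::
  "('k::field \<Rightarrow> real) \<Rightarrow> ('v::finite \<Rightarrow> real) \<Rightarrow> ('v mon \<Rightarrow> 'v mon \<Rightarrow> bool)
   \<Rightarrow> ('v, 'k) mpoly list \<Rightarrow> (nat \<Rightarrow> ('v, 'k) mpoly) set"
  for val w le1 F where
    gen: "tame_syz F a i \<Longrightarrow> vmon (LM val w le1 (a i)) i \<in> LM_TSyz val w le1 F"
  | zero: "(\<lambda>_. 0) \<in> LM_TSyz val w le1 F"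
  | add: "u \<in> LM_TSyz val w le1 F \<Longrightarrow> v \<in> LM_TSyz val w le1 F
          \<Longrightarrow> (\<lambda>j. u j + v j) \<in> LM_TSyz val w le1 F"
  | smul: "u \<in> LM_TSyz val w le1 F \<Longrightarrow> (\<lambda>j. p * u j) \<in> LM_TSyz val w le1 F"

definition le_sign ::
  "('k::field \<Rightarrow> real) \<Rightarrow> ('v::finite \<Rightarrow> real) \<Rightarrow> ('v mon \<Rightarrow> 'v mon \<Rightarrow> bool)
   \<Rightarrow> ('v mon \<Rightarrow> 'v mon \<Rightarrow> bool) \<Rightarrow> ('v, 'k) mpoly list
   \<Rightarrow> 'v mon \<times> nat \<Rightarrow> 'v mon \<times> nat \<Rightarrow> bool" where
  "le_sign val w le1 lem F m1 m2 = (case m1 of (\<alpha>, i) \<Rightarrow> case m2 of (\<beta>, j) \<Rightarrow>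
     let inM = (\<lambda>\<gamma>. vmon \<gamma> i \<in> LM_TSyz val w le1 F);
         d\<alpha> = tdeg (xmon \<alpha> * F ! i); d\<beta> = tdeg (xmon \<beta> * F ! i) in
     i < j \<or>
     (i = j \<and> d\<alpha> < d\<beta>) \<or>
     (i = j \<and> d\<alpha> = d\<beta> \<and>
        ((\<not> inM \<alpha> \<and> inM \<beta>) \<or> (inM \<alpha> \<and> inM \<beta> \<and> lem \<alpha> \<beta>) \<or>
         (\<not> inM \<alpha> \<and> \<not> inM \<beta> \<and> lem \<alpha> \<beta>))))"

definition lt_sign where
  "lt_sign val w le1 lem F m1 m2 \<longleftrightarrow> le_sign val w le1 lem F m1 m2 \<and> m1 \<noteq> m2"

definition ideal_of :: "('v, 'k::comm_ring_1) mpoly list \<Rightarrow> ('v, 'k) mpoly set" where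
  "ideal_of F = {(\<Sum>j<length F. a j * F ! j) | a. True}"

definition I_le ::
  "('k::field \<Rightarrow> real) \<Rightarrow> ('v::finite \<Rightarrow> real) \<Rightarrow> ('v mon \<Rightarrow> 'v mon \<Rightarrow> bool)
   \<Rightarrow> ('v mon \<Rightarrow> 'v mon \<Rightarrow> bool) \<Rightarrow> ('v, 'k) mpoly list
   \<Rightarrow> 'v mon \<times> nat \<Rightarrow> ('v, 'k) mpoly set" where
  "I_le val w le1 lem F m = {p. \<exists>c :: 'v mon \<times> nat \<Rightarrow> 'k.
      finite {t. c t \<noteq> 0} \<and>
      (\<forall>t. c t \<noteq> 0 \<longrightarrow> snd t < length F \<and> le_sign val w le1 lem F t m) \<and>
      p = (\<Sum>t\<in>{t. c t \<noteq> 0}. Poly_Mapping.single (fst t) (c t) * F ! snd t)}"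

definition sig ::
  "('k::field \<Rightarrow> real) \<Rightarrow> ('v::finite \<Rightarrow> real) \<Rightarrow> ('v mon \<Rightarrow> 'v mon \<Rightarrow> bool)
   \<Rightarrow> ('v mon \<Rightarrow> 'v mon \<Rightarrow> bool) \<Rightarrow> ('v, 'k) mpoly list
   \<Rightarrow> ('v, 'k) mpoly \<Rightarrow> 'v mon \<times> nat" where
  "sig val w le1 lem F f = (THE m. snd m < length F \<and> f \<in> I_le val w le1 lem F m \<and>
      (\<forall>m'. snd m' < length F \<and> f \<in> I_le val w le1 lem F m' \<longrightarrow> le_sign val w le1 lem F m m'))"

end

theory Submission
  imports Defs "HOL-Library.FuncSet"
begin


lemma lem_props:
  assumes "is_deg_monomial_order lem"
  shows "\<And>x. lem x x" "\<And>x y. lem x y \<Longrightarrow> lem y x \<Longrightarrow> x = y"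
    "\<And>x y z. lem x y \<Longrightarrow> lem y z \<Longrightarrow> lem x z" "\<And>x y. lem x y \<or> lem y x"
    "\<And>x y. mdeg x < mdeg y \<Longrightarrow> lem x y"
proof -
  from assms[unfolded is_deg_monomial_order_def] have H: "is_monomial_order lem \<and> (\<forall>x y. mdeg x < mdeg y \<longrightarrow> lem x y)"
    .
  from H[unfolded is_monomial_order_def] have A: "(\<forall>x. lem x x) \<and> (\<forall>x y. lem x y \<and> lem y x \<longrightarrow> x = y) \<and>
     (\<forall>x y z. lem x y \<and> lem y z \<longrightarrow> lem x z) \<and> (\<forall>x y. lem x y \<or> lem y x) \<and>
     (\<forall>x. lem 0 x) \<and> (\<forall>x y z. lem x y \<longrightarrow> lem (x + z) (y + z))"
    by (rule conjunct1)
  show "\<And>x. lem x x" using A by blast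
  show "\<And>x y. lem x y \<Longrightarrow> lem y x \<Longrightarrow> x = y" using A by blast
  show "\<And>x y z. lem x y \<Longrightarrow> lem y z \<Longrightarrow> lem x z" using A by blast
  show "\<And>x y. lem x y \<or> lem y x" using A by blast
  show "\<And>x y. mdeg x < mdeg y \<Longrightarrow> lem x y" using H by blast
qed
lemma le_sign_refl:
  assumes "is_deg_monomial_order lem"
  shows "le_sign val w le1 lem F x x"
  using lem_props(1)[OF assms] unfolding le_sign_def by (auto simp: Let_def split: prod.splits)

lemma le_sign_total:
  assumes "is_deg_monomial_order lem"
  shows "le_sign val w le1 lem F x y \<or> le_sign val w le1 lem F y x"
  using lem_props(4)[OF assms] unfolding le_sign_def by (auto simp: Let_def split: prod.splits)

lemma le_sign_antisym:
  assumes "is_deg_monomial_order lem"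
  shows "le_sign val w le1 lem F x y \<Longrightarrow> le_sign val w le1 lem F y x \<Longrightarrow> x = y"
  unfolding le_sign_def by (auto simp: Let_def split: prod.splits intro: lem_props(2)[OF assms])

lemma le_sign_trans:
  assumes "is_deg_monomial_order lem"
  shows "le_sign val w le1 lem F x y \<Longrightarrow> le_sign val w le1 lem F y z \<Longrightarrow> le_sign val w le1 lem F x z"
  unfolding le_sign_def by (auto simp: Let_def split: prod.splits intro: lem_props(3)[OF assms])

lemma finite_min:
  assumes "finite A" "A \<noteq> {}" "\<And>x y. R x y \<or> R y x" "\<And>x y z. R x y \<Longrightarrow> R y z \<Longrightarrow> R x z"
  shows "\<exists>m\<in>A. \<forall>x\<in>A. R m x"
  using assms(1,2)
proof (induction A rule: finite_ne_induct)
  case (singleton x)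
  then show ?case using assms(3)[of x x] by auto
next
  case (insert x F)
  then obtain m where "m \<in> F" "\<forall>y\<in>F. R m y" by blast
  note m = this
  show ?case
  proof (cases "R m x")
    case True
    then show ?thesis using m by auto
  next
    case False
    then have "R x m" using assms(3)[of m x] by simp
    then have "\<forall>y\<in>F. R x y" using m(2) assms(4)[of x m] by simp
    moreover have "R x x" using assms(3)[of x x] by simp
    ultimately show ?thesis by auto
  qed
qed

lemma finite_mdeg: "finite {\<alpha>::('v::finite) mon. mdeg \<alpha> = k}"
proof -
  have "Poly_Mapping.lookup ` {\<alpha>::'v mon. mdeg \<alpha> = k} \<subseteq> Pi\<^sub>E UNIV (\<lambda>_. {..k})"
  proof
    fix f assume "f \<in> Poly_Mapping.lookup ` {\<alpha>::'v mon. mdeg \<alpha> = k}"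
    then obtain \<alpha> where a: "f = Poly_Mapping.lookup \<alpha>" "mdeg \<alpha> = k" by blast
    have "f v \<le> k" for v
    proof -
      have "Poly_Mapping.lookup \<alpha> v \<le> (\<Sum>v\<in>UNIV. Poly_Mapping.lookup \<alpha> v)"
        by (rule member_le_sum) simp_all
      then show ?thesis using a unfolding mdeg_def by simp
    qed
    then show "f \<in> Pi\<^sub>E UNIV (\<lambda>_. {..k})" unfolding PiE_UNIV_domain Pi_def by simp
  qed
  then have "finite (Poly_Mapping.lookup ` {\<alpha>::'v mon. mdeg \<alpha> = k})"
    by (rule finite_subset) (rule finite_PiE; simp)
  moreover have "inj_on Poly_Mapping.lookup {\<alpha>::'v mon. mdeg \<alpha> = k}"
    by (rule inj_onI) (simp add: poly_mapping_eqI)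
  ultimately show ?thesis by (rule finite_imageD)
qed

lemma min_exists:
  assumes lem: "is_deg_monomial_order lem" and ne: "S \<noteq> {}"
  shows "\<exists>m\<in>S. \<forall>m'\<in>S. le_sign val w le1 lem F m m'"
proof -
  define inM where "inM = (\<lambda>m. vmon (fst m) (snd m) \<in> LM_TSyz val w le1 F)"
  define D where "D = (\<lambda>m. tdeg (xmon (fst m) * F ! snd m))"
  define i0 where "i0 = (LEAST i. i \<in> snd ` S)"
  define S1 where "S1 = {m\<in>S. snd m = i0}"
  have S1ne: "S1 \<noteq> {}" unfolding S1_def i0_def using ne
    by (smt (verit, del_insts) LeastI empty_Collect_eq ex_in_conv image_iff)
  define d0 where "d0 = (LEAST d. d \<in> D ` S1)"
  define S2 where "S2 = {m\<in>S1. D m = d0}"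
  have S2ne: "S2 \<noteq> {}" unfolding S2_def d0_def using S1ne
    by (smt (verit, del_insts) LeastI empty_Collect_eq ex_in_conv image_iff)
  define S3 where "S3 = (if (\<exists>m\<in>S2. \<not> inM m) then {m\<in>S2. \<not> inM m} else S2)"
  have S3ne: "S3 \<noteq> {}" using S2ne unfolding S3_def by auto
  have S3sub: "S3 \<subseteq> S2" unfolding S3_def by auto
  define k0 where "k0 = (LEAST k. k \<in> (mdeg o fst) ` S3)"
  define S4 where "S4 = {m\<in>S3. mdeg (fst m) = k0}"
  have S4ne: "S4 \<noteq> {}" unfolding S4_def k0_def using S3ne
    by (smt (verit, del_insts) LeastI empty_Collect_eq ex_in_conv image_iff comp_apply)
  have "S4 \<subseteq> (\<lambda>\<alpha>. (\<alpha>, i0)) ` {\<alpha>. mdeg \<alpha> = k0}"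
    using S3sub unfolding S4_def S2_def S1_def by force
  then have finS4: "finite S4" using finite_mdeg by (metis finite_imageI finite_subset)
  obtain m0 where m0: "m0 \<in> S4" "\<forall>x\<in>S4. lem (fst m0) (fst x)"
  proof -
    have tot: "\<And>x y. lem (fst x) (fst y) \<or> lem (fst y) (fst x)" by (rule lem_props(4)[OF lem])
    have tr: "\<And>x y z. lem (fst x) (fst y) \<Longrightarrow> lem (fst y) (fst z) \<Longrightarrow> lem (fst x) (fst z)"
      by (rule lem_props(3)[OF lem])
    have "\<exists>m\<in>S4. \<forall>x\<in>S4. lem (fst m) (fst x)"
      apply (rule finite_min[OF finS4 S4ne])
       apply (rule tot)
      apply (erule (1) tr)
      done
    then show ?thesis using that by blast
  qed
  have m0S3: "m0 \<in> S3" and m0i: "snd m0 = i0" and m0D: "D m0 = d0" and m0k: "mdeg (fst m0) = k0"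
    using m0(1) S3sub unfolding S4_def S2_def S1_def by auto
  have m0S: "m0 \<in> S" using m0S3 S3sub unfolding S2_def S1_def by auto
  have L3: "lem (fst m0) (fst m')" if m'S3: "m' \<in> S3" for m'
  proof -
    have "k0 \<le> mdeg (fst m')" unfolding k0_def using m'S3 by (simp add: Least_le)
    show ?thesis
    proof (cases "k0 < mdeg (fst m')")
      case True
      then show ?thesis using m0k lem_props(5)[OF lem, of "fst m0" "fst m'"] by simp
    next
      case False
      then have "m' \<in> S4" using m'S3 \<open>k0 \<le> mdeg (fst m')\<close> unfolding S4_def by simp
      then show ?thesis using m0(2) by blast
    qed
  qed
  have L2: "inM m' \<and> \<not> inM m0" if "m' \<in> S2" "m' \<notin> S3" for m'
    using that m0S3 unfolding S3_def by (auto split: if_splits)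
  have L2b: "\<not> inM m0" if "m' \<in> S2" "m' \<in> S3" "\<not> inM m'" for m'
    using that m0S3 unfolding S3_def by (auto split: if_splits)
  have "le_sign val w le1 lem F m0 m'" if m'S: "m' \<in> S" for m'
  proof -
    obtain \<alpha> i where m0e: "m0 = (\<alpha>, i)" by (cases m0)
    obtain \<beta> j where m'e: "m' = (\<beta>, j)" by (cases m')
    have "i0 \<le> snd m'" unfolding i0_def using m'S by (simp add: Least_le)
    then consider "i0 < snd m'" | "m' \<in> S1" using m'S unfolding S1_def by force
    then show ?thesis
    proof cases
      case 1 then show ?thesis using m0i m0e m'e unfolding le_sign_def by auto
    next
      case 2
      have "d0 \<le> D m'" unfolding d0_def using 2 by (simp add: Least_le)
      then consider "d0 < D m'" | "m' \<in> S2" using 2 unfolding S2_def by force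
      then show ?thesis
      proof cases
        case 1 then show ?thesis using m0i m0e m'e m0D 2 unfolding le_sign_def D_def S1_def by auto
      next
        case 3: 2
        have j: "j = i" "D m' = D m0" using 3 m0i m0e m'e m0D unfolding S2_def S1_def by auto
        show ?thesis
        proof (cases "m' \<in> S3")
          case True
          then show ?thesis using L3[OF True] L2b[OF 3 True] j m0e m'e
            unfolding le_sign_def D_def inM_def by (auto simp: Let_def)
        next
          case False
          then show ?thesis using L2[OF 3 False] j m0e m'e
            unfolding le_sign_def D_def inM_def by (auto simp: Let_def)
        qed
      qed
    qed
  qed
  then show ?thesis using m0S by blast
qed

lemma max_exists:
  assumes lem: "is_deg_monomial_order lem" and "finite T" "T \<noteq> {}"
  shows "\<exists>m\<in>T. \<forall>t\<in>T. le_sign val w le1 lem F t m"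
  using finite_min[OF assms(2,3), of "\<lambda>x y. le_sign val w le1 lem F y x"]
    le_sign_total[OF lem] le_sign_trans[OF lem] by blast

lemma sig_prop:
  assumes lem: "is_deg_monomial_order lem" and "snd m1 < length F" "f \<in> I_le val w le1 lem F m1"
  shows "snd (sig val w le1 lem F f) < length F \<and> f \<in> I_le val w le1 lem F (sig val w le1 lem F f) \<and>
     (\<forall>m'. snd m' < length F \<and> f \<in> I_le val w le1 lem F m' \<longrightarrow> le_sign val w le1 lem F (sig val w le1 lem F f) m')"
proof -
  let ?S = "{m. snd m < length F \<and> f \<in> I_le val w le1 lem F m}"
  obtain m where m: "m \<in> ?S" "\<forall>m'\<in>?S. le_sign val w le1 lem F m m'"
    using min_exists[OF lem, of ?S] assms(2,3) by blast
  have "\<exists>!m. snd m < length F \<and> f \<in> I_le val w le1 lem F m \<and>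
      (\<forall>m'. snd m' < length F \<and> f \<in> I_le val w le1 lem F m' \<longrightarrow> le_sign val w le1 lem F m m')"
    apply (rule ex1I[of _ m])
    using m apply blast
    using m le_sign_antisym[OF lem] by blast
  then show ?thesis unfolding sig_def by (rule theI')
qed

lemma lookup_scale: "Poly_Mapping.lookup (Poly_Mapping.single 0 a * f) \<beta> = a * Poly_Mapping.lookup f \<beta>"
  by (simp flip: mult_map_scale_conv_mult add: map.rep_eq when_def)

lemma LM_scale:
  assumes "is_valuation val" "(a::'k::field) \<noteq> 0"
  shows "LM val w le1 (Poly_Mapping.single 0 a * f) = LM val w le1 f"
proof -
  have ks: "Poly_Mapping.keys (Poly_Mapping.single 0 a * f) = Poly_Mapping.keys f"
    using assms(2) by (auto simp: in_keys_iff lookup_scale)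
  have vm: "x \<noteq> 0 \<Longrightarrow> val (a * x) = val a + val x" for x
    using assms unfolding is_valuation_def by blast
  have tl: "trop_less val w le1 (a * Poly_Mapping.lookup f \<beta>, \<beta>) (a * Poly_Mapping.lookup f \<gamma>, \<gamma>)
      = trop_less val w le1 (Poly_Mapping.lookup f \<beta>, \<beta>) (Poly_Mapping.lookup f \<gamma>, \<gamma>)"
    if "\<beta> \<in> Poly_Mapping.keys f" "\<gamma> \<in> Poly_Mapping.keys f" for \<beta> \<gamma>
    using that vm[of "Poly_Mapping.lookup f \<beta>"] vm[of "Poly_Mapping.lookup f \<gamma>"]
    unfolding trop_less_def by (auto simp: in_keys_iff)
  have "(\<lambda>\<alpha>. \<alpha> \<in> Poly_Mapping.keys (Poly_Mapping.single 0 a * f) \<and>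
      (\<forall>\<beta>\<in>Poly_Mapping.keys (Poly_Mapping.single 0 a * f). \<beta> \<noteq> \<alpha> \<longrightarrow>
        trop_less val w le1 (Poly_Mapping.lookup (Poly_Mapping.single 0 a * f) \<beta>, \<beta>)
          (Poly_Mapping.lookup (Poly_Mapping.single 0 a * f) \<alpha>, \<alpha>)))
    = (\<lambda>\<alpha>. \<alpha> \<in> Poly_Mapping.keys f \<and>
      (\<forall>\<beta>\<in>Poly_Mapping.keys f. \<beta> \<noteq> \<alpha> \<longrightarrow>
        trop_less val w le1 (Poly_Mapping.lookup f \<beta>, \<beta>) (Poly_Mapping.lookup f \<alpha>, \<alpha>)))"
    unfolding ks lookup_scale using tl by (intro ext) auto
  then show ?thesis unfolding LM_def by simp
qed

lemma expand_pm: "(p::('a \<Rightarrow>\<^sub>0 'b::comm_monoid_add)) = (\<Sum>\<beta>\<in>Poly_Mapping.keys p. Poly_Mapping.single \<beta> (Poly_Mapping.lookup p \<beta>))"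
  by (rule poly_mapping_eqI) (auto simp: lookup_sum lookup_single when_def in_keys_iff)


lemma ideal_in_I_le:
  assumes lem: "is_deg_monomial_order lem" and "f \<in> ideal_of F" "f \<noteq> 0"
  shows "\<exists>m. snd m < length F \<and> f \<in> I_le val w le1 lem F m"
proof -
  obtain a where fa: "f = (\<Sum>j<length F. a j * F ! j)" using assms(2) unfolding ideal_of_def by auto
  define c where "c = (\<lambda>t::'a mon \<times> nat. if snd t < length F then Poly_Mapping.lookup (a (snd t)) (fst t) else 0)"
  define T where "T = {t. c t \<noteq> 0}"
  have Teq: "T = prod.swap ` (SIGMA j:{..<length F}. Poly_Mapping.keys (a j))"
  proof (intro set_eqI iffI)
    fix t assume "t \<in> T"
    then have "prod.swap t \<in> (SIGMA j:{..<length F}. Poly_Mapping.keys (a j))"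
      unfolding T_def c_def by (cases t) (auto simp: in_keys_iff split: if_splits)
    then show "t \<in> prod.swap ` (SIGMA j:{..<length F}. Poly_Mapping.keys (a j))"
      by (metis image_eqI swap_swap)
  next
    fix t assume "t \<in> prod.swap ` (SIGMA j:{..<length F}. Poly_Mapping.keys (a j))"
    then show "t \<in> T" unfolding T_def c_def by (auto simp: in_keys_iff)
  qed
  have finT: "finite T" unfolding Teq by (auto intro!: finite_SigmaI)
  have "(\<Sum>t\<in>T. Poly_Mapping.single (fst t) (c t) * F ! snd t)
      = (\<Sum>t\<in>(SIGMA j:{..<length F}. Poly_Mapping.keys (a j)). Poly_Mapping.single (snd t) (c (prod.swap t)) * F ! fst t)"
    unfolding Teq by (subst sum.reindex) (auto simp: comp_def)
  also have "\<dots> = (\<Sum>j<length F. \<Sum>\<beta>\<in>Poly_Mapping.keys (a j). Poly_Mapping.single \<beta> (Poly_Mapping.lookup (a j) \<beta>) * F ! j)"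
  proof -
    have "(\<Sum>t\<in>(SIGMA j:{..<length F}. Poly_Mapping.keys (a j)). Poly_Mapping.single (snd t) (c (prod.swap t)) * F ! fst t)
       = (\<Sum>(j,\<beta>)\<in>(SIGMA j:{..<length F}. Poly_Mapping.keys (a j)). Poly_Mapping.single \<beta> (Poly_Mapping.lookup (a j) \<beta>) * F ! j)"
      by (rule sum.cong) (auto simp: c_def)
    also have "\<dots> = (\<Sum>j<length F. \<Sum>\<beta>\<in>Poly_Mapping.keys (a j). Poly_Mapping.single \<beta> (Poly_Mapping.lookup (a j) \<beta>) * F ! j)"
      by (rule sum.Sigma[symmetric]) auto
    finally show ?thesis .
  qed
  also have "\<dots> = (\<Sum>j<length F. a j * F ! j)"
  proof (rule sum.cong[OF refl])
    fix j
    have "a j * F ! j = (\<Sum>\<beta>\<in>Poly_Mapping.keys (a j). Poly_Mapping.single \<beta> (Poly_Mapping.lookup (a j) \<beta>)) * F ! j"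
      by (subst expand_pm[of "a j"]) simp
    then show "(\<Sum>\<beta>\<in>Poly_Mapping.keys (a j). Poly_Mapping.single \<beta> (Poly_Mapping.lookup (a j) \<beta>) * F ! j) = a j * F ! j"
      by (simp add: sum_distrib_right)
  qed
  finally have fT: "f = (\<Sum>t\<in>T. Poly_Mapping.single (fst t) (c t) * F ! snd t)" using fa by simp
  have "T \<noteq> {}" using fT assms(3) by auto
  then obtain m where m: "m \<in> T" "\<forall>t\<in>T. le_sign val w le1 lem F t m"
    using max_exists[OF lem finT] by blast
  have "snd m < length F" using m(1) unfolding T_def c_def by (auto split: if_splits)
  moreover have "f \<in> I_le val w le1 lem F m"
    unfolding I_le_def
    apply (rule CollectI, rule exI[of _ c])
    using finT fT m(2) unfolding T_def c_def by (auto split: if_splits)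
  ultimately show ?thesis by blast
qed


lemma coef_nonzero:
  assumes lem: "is_deg_monomial_order lem" and "p \<noteq> 0" and fin: "finite {t. c t \<noteq> 0}"
    and cb: "\<forall>t. c t \<noteq> 0 \<longrightarrow> snd t < length F \<and> le_sign val w le1 lem F t m"
    and pe: "p = (\<Sum>t\<in>{t. c t \<noteq> 0}. Poly_Mapping.single (fst t) (c t) * F ! snd t)"
    and mn: "\<forall>m'. snd m' < length F \<and> p \<in> I_le val w le1 lem F m' \<longrightarrow> le_sign val w le1 lem F m m'"
  shows "c m \<noteq> 0"
proof -
  have "{t. c t \<noteq> 0} \<noteq> {}"
  proof
    assume "{t. c t \<noteq> 0} = {}"
    then have "p = 0" using pe by (simp only: sum.empty)
    then show False using assms(2) by simp
  qed
  then obtain t0 where t0: "t0 \<in> {t. c t \<noteq> 0}" "\<forall>t\<in>{t. c t \<noteq> 0}. le_sign val w le1 lem F t t0"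
    using max_exists[OF lem fin] by blast
  have "p \<in> I_le val w le1 lem F t0"
    unfolding I_le_def using fin cb t0(2) pe by blast
  then have "le_sign val w le1 lem F m t0" using mn cb t0(1) by blast
  moreover have "le_sign val w le1 lem F t0 m" using cb t0(1) by blast
  ultimately have "t0 = m" using le_sign_antisym[OF lem] by blast
  then show ?thesis using t0(1) by simp
qed

lemma scale_term: "Poly_Mapping.single 0 a * (Poly_Mapping.single \<beta> x * (P::('v, 'k::field) mpoly))
   = Poly_Mapping.single \<beta> (a * x) * P"
  by (simp add: mult.assoc[symmetric] mult_single)

theorem mainTheorem3:
  fixes val :: "'k::field \<Rightarrow> real"
    and w :: "'v::finite \<Rightarrow> real"
    and le1 lem :: "'v mon \<Rightarrow> 'v mon \<Rightarrow> bool"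
    and F :: "('v, 'k) mpoly list"
    and f g :: "('v, 'k) mpoly"
  assumes "is_valuation val"
    and "\<forall>v. w v \<in> val ` (UNIV - {0})"
    and "is_monomial_order le1"
    and "is_deg_monomial_order lem"
    and "sorted (map tdeg F)"
    and "f \<in> ideal_of F" and "g \<in> ideal_of F"
    and "f \<noteq> 0" and "g \<noteq> 0"
    and "sig val w le1 lem F f = sig val w le1 lem F g"
    and "LM val w le1 f \<noteq> LM val w le1 g"
  shows "\<exists>a b :: 'k. a \<noteq> 0 \<and> b \<noteq> 0 \<and>
           Poly_Mapping.single 0 a * f + Poly_Mapping.single 0 b * g \<noteq> 0 \<and>
           lt_sign val w le1 lem F
             (sig val w le1 lem F (Poly_Mapping.single 0 a * f + Poly_Mapping.single 0 b * g))
             (sig val w le1 lem F f)"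
proof -
  note lem = assms(4)
  let ?LS = "le_sign val w le1 lem F"
  let ?I = "I_le val w le1 lem F"
  define m where "m = sig val w le1 lem F f"
  obtain mf where "snd mf < length F" "f \<in> ?I mf" using ideal_in_I_le[OF lem assms(6,8)] by blast
  from sig_prop[OF lem this] have Pf: "snd m < length F" "f \<in> ?I m"
     "\<forall>m'. snd m' < length F \<and> f \<in> ?I m' \<longrightarrow> ?LS m m'" unfolding m_def by auto
  obtain mg where "snd mg < length F" "g \<in> ?I mg" using ideal_in_I_le[OF lem assms(7,9)] by blast
  from sig_prop[OF lem this] have Pg: "g \<in> ?I m"
     "\<forall>m'. snd m' < length F \<and> g \<in> ?I m' \<longrightarrow> ?LS m m'" unfolding m_def assms(10) by auto
  obtain c where c: "finite {t. c t \<noteq> 0}" "\<forall>t. c t \<noteq> 0 \<longrightarrow> snd t < length F \<and> ?LS t m"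
    "f = (\<Sum>t\<in>{t. c t \<noteq> 0}. Poly_Mapping.single (fst t) (c t) * F ! snd t)"
    using Pf(2) unfolding I_le_def by blast
  obtain d where d: "finite {t. d t \<noteq> 0}" "\<forall>t. d t \<noteq> 0 \<longrightarrow> snd t < length F \<and> ?LS t m"
    "g = (\<Sum>t\<in>{t. d t \<noteq> 0}. Poly_Mapping.single (fst t) (d t) * F ! snd t)"
    using Pg(1) unfolding I_le_def by blast
  have cm: "c m \<noteq> 0" using coef_nonzero[OF lem assms(8) c Pf(3)] .
  have dm: "d m \<noteq> 0" using coef_nonzero[OF lem assms(9) d Pg(2)] .
  define a where "a = d m"
  define b where "b = - c m"
  define e where "e = (\<lambda>t. a * c t + b * d t)"
  define U where "U = {t. c t \<noteq> 0} \<union> {t. d t \<noteq> 0}"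
  define E where "E = {t. e t \<noteq> 0}"
  define h where "h = Poly_Mapping.single 0 a * f + Poly_Mapping.single 0 b * g"
  have finU: "finite U" unfolding U_def by (rule finite_UnI[OF c(1) d(1)])
  have EU: "E \<subseteq> U" unfolding E_def U_def e_def by auto
  have finE: "finite E" using finU EU finite_subset by blast
  have fU: "f = (\<Sum>t\<in>U. Poly_Mapping.single (fst t) (c t) * F ! snd t)"
    unfolding c(3) by (rule sum.mono_neutral_left[OF finU]) (auto simp: U_def)
  have gU: "g = (\<Sum>t\<in>U. Poly_Mapping.single (fst t) (d t) * F ! snd t)"
    unfolding d(3) by (rule sum.mono_neutral_left[OF finU]) (auto simp: U_def)
  have "h = (\<Sum>t\<in>U. Poly_Mapping.single (fst t) (e t) * F ! snd t)"
    unfolding h_def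
    apply (subst fU, subst gU)
    apply (simp add: sum_distrib_left scale_term sum.distrib[symmetric] e_def single_add distrib_right)
    done
  also have "\<dots> = (\<Sum>t\<in>E. Poly_Mapping.single (fst t) (e t) * F ! snd t)"
    by (rule sum.mono_neutral_right[OF finU EU]) (auto simp: E_def)
  finally have hE: "h = (\<Sum>t\<in>E. Poly_Mapping.single (fst t) (e t) * F ! snd t)" .
  have em: "e m = 0" unfolding e_def a_def b_def by simp
  have Eb: "snd t < length F \<and> ?LS t m \<and> t \<noteq> m" if "t \<in> E" for t
  proof -
    have "c t \<noteq> 0 \<or> d t \<noteq> 0" using that unfolding E_def e_def by auto
    then have "snd t < length F \<and> ?LS t m" using c(2) d(2) by blast
    moreover have "t \<noteq> m" using that em unfolding E_def by auto
    ultimately show ?thesis by blast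
  qed
  have h0: "h \<noteq> 0"
  proof
    assume "h = 0"
    then have "Poly_Mapping.single 0 a * f = Poly_Mapping.single 0 (c m) * g"
      unfolding h_def b_def by (simp add: single_uminus add_eq_0_iff)
    then have "LM val w le1 f = LM val w le1 g"
      using LM_scale[OF assms(1), of a w le1 f] LM_scale[OF assms(1) cm, of w le1 g] dm a_def by simp
    then show False using assms(11) by simp
  qed
  have "E \<noteq> {}"
  proof
    assume "E = {}"
    then have "h = 0" using hE by (simp only: sum.empty)
    then show False using h0 by simp
  qed
  then obtain t0 where t0: "t0 \<in> E" "\<forall>t\<in>E. ?LS t t0"
    using max_exists[OF lem finE] by blast
  have hI: "h \<in> ?I t0" unfolding I_le_def
    apply (rule CollectI, rule exI[of _ e])
    using finE Eb t0(2) hE unfolding E_def by blast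
  have t0b: "snd t0 < length F" "?LS t0 m" "t0 \<noteq> m" using Eb[OF t0(1)] by auto
  from sig_prop[OF lem t0b(1) hI] have "?LS (sig val w le1 lem F h) t0" using t0b(1) hI by blast
  then have "lt_sign val w le1 lem F (sig val w le1 lem F h) m"
    unfolding lt_sign_def using t0b le_sign_trans[OF lem] le_sign_antisym[OF lem] by blast
  moreover have "a \<noteq> 0" "b \<noteq> 0" using cm dm unfolding a_def b_def by simp_all
  ultimately show ?thesis using h0 unfolding h_def m_def by blast
qed

end
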